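(* Let $s,k$ be job indices and let $S$ be an $(s,k)$-schedule (with the earliest-deadline property) with $C_{\max}(S)=t$. Suppose $[u,t)$ is a fixed segment of $S$. Then every job $i\le k$ with $u<C_i(S)\le t$ satisfies $C_i(S)=C^{\mathrm{edf}}_{s,i}$.
   Context: Time is discrete (slots $[t,t+1)$). There are $n$ jobs, job $j$ with integer processing time $p_j\ge1$, release time $r_j$, deadline $d_j$; jobs are indexed so that $d_1<\dots<d_n$, release times are pairwise distinct, and the instance is feasible. A (partial) schedule assigns to each slot at most one job so that each job it schedules receives exactly $p_j$ slots within $[r_j,d_j)$; $C_j(S)$ is the completion time of $j$ and $C_{\max}(S)=\max_jC_j(S)$. The earliest-deadline property: whenever $S$ is busy at slot $t$, it executes the released, not yet completed scheduled job with smallest deadline; all schedules are assumed to have this property. For $s\in\{1,\dots,n\}$, $k\in\{0,\dots,n\}$, an $(s,k)$-schedule is a schedule $S$ with $C_{\max}(S)\le d_k$ that schedules exactly the jobs $j\le k$ with $r_s\le r_j<C_{\max}(S)$ (the empty schedule counts, with $C_{\max}=r_s$). For $r_i\ge r_s$, $C^{\mathrm{edf}}_{s,i}$ is the minimum completion time of job $i$ over all $(s,i)$-schedules that schedule $i$. An interval $[t',t)$ in which $S$ is busy at every slot is a fixed segment of $S$ if every job executed by $S$ in $[t',t)$ is released in $[t',t)$ and has all its slots in $[t',t)$. *)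

theory Defs
  imports Main
begin

(* Jobs are 1..n; p r d :: nat => nat give processing time, release time, deadline.
   Time slots are natural numbers; slot t is the interval [t,t+1).
   A (partial) schedule is a map S :: nat => nat option assigning to each slot at most one job. *)

definition jobs_of :: "(nat \<Rightarrow> nat option) \<Rightarrow> nat set" where
  "jobs_of S = {j. \<exists>t. S t = Some j}"

definition valid_schedule ::
  "nat \<Rightarrow> (nat \<Rightarrow> nat) \<Rightarrow> (nat \<Rightarrow> nat) \<Rightarrow> (nat \<Rightarrow> nat) \<Rightarrow> (nat \<Rightarrow> nat option) \<Rightarrow> bool" where
  "valid_schedule n p r d S \<longleftrightarrow>
     (\<forall>t j. S t = Some j \<longrightarrow> 1 \<le> j \<and> j \<le> n \<and> r j \<le> t \<and> t < d j) \<and>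
     (\<forall>j \<in> jobs_of S. card {t. S t = Some j} = p j)"

definition compl :: "(nat \<Rightarrow> nat option) \<Rightarrow> nat \<Rightarrow> nat" where
  "compl S j = Suc (Max {t. S t = Some j})"

(* C_max; the empty schedule gets C_max = r_s (convention for (s,k)-schedules) *)
definition cmax :: "(nat \<Rightarrow> nat) \<Rightarrow> nat \<Rightarrow> (nat \<Rightarrow> nat option) \<Rightarrow> nat" where
  "cmax r s S = (if jobs_of S = {} then r s else Max (compl S ` jobs_of S))"

definition edf :: "(nat \<Rightarrow> nat) \<Rightarrow> (nat \<Rightarrow> nat) \<Rightarrow> (nat \<Rightarrow> nat option) \<Rightarrow> bool" where
  "edf r d S \<longleftrightarrow>
     (\<forall>t j j'. S t = Some j \<longrightarrow> j' \<in> jobs_of S \<longrightarrow> r j' \<le> t \<longrightarrow> t < compl S j' \<longrightarrow> d j \<le> d j')"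

definition sk_schedule ::
  "nat \<Rightarrow> (nat \<Rightarrow> nat) \<Rightarrow> (nat \<Rightarrow> nat) \<Rightarrow> (nat \<Rightarrow> nat) \<Rightarrow> nat \<Rightarrow> nat \<Rightarrow> (nat \<Rightarrow> nat option) \<Rightarrow> bool" where
  "sk_schedule n p r d s k S \<longleftrightarrow>
     valid_schedule n p r d S \<and> edf r d S \<and> cmax r s S \<le> d k \<and>
     jobs_of S = {j. 1 \<le> j \<and> j \<le> k \<and> r s \<le> r j \<and> r j < cmax r s S}"

definition C_edf ::
  "nat \<Rightarrow> (nat \<Rightarrow> nat) \<Rightarrow> (nat \<Rightarrow> nat) \<Rightarrow> (nat \<Rightarrow> nat) \<Rightarrow> nat \<Rightarrow> nat \<Rightarrow> nat" where
  "C_edf n p r d s i =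
     (LEAST c. \<exists>S. sk_schedule n p r d s i S \<and> i \<in> jobs_of S \<and> compl S i = c)"

definition fixed_segment :: "(nat \<Rightarrow> nat) \<Rightarrow> (nat \<Rightarrow> nat option) \<Rightarrow> nat \<Rightarrow> nat \<Rightarrow> bool" where
  "fixed_segment r S t' t \<longleftrightarrow>
     (\<forall>x. t' \<le> x \<and> x < t \<longrightarrow> S x \<noteq> None) \<and>
     (\<forall>x j. t' \<le> x \<and> x < t \<and> S x = Some j \<longrightarrow>
        t' \<le> r j \<and> r j < t \<and> (\<forall>y. S y = Some j \<longrightarrow> t' \<le> y \<and> y < t))"

definition instance_ok :: "nat \<Rightarrow> (nat \<Rightarrow> nat) \<Rightarrow> (nat \<Rightarrow> nat) \<Rightarrow> (nat \<Rightarrow> nat) \<Rightarrow> bool" where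
  "instance_ok n p r d \<longleftrightarrow>
     (\<forall>j. 1 \<le> j \<and> j \<le> n \<longrightarrow> 1 \<le> p j) \<and>
     (\<forall>i j. 1 \<le> i \<and> i < j \<and> j \<le> n \<longrightarrow> d i < d j) \<and>
     inj_on r {1..n} \<and>
     (\<exists>S. valid_schedule n p r d S \<and> jobs_of S = {1..n})"

end

theory Submission
  imports Defs
begin

lemma fin_slots:
  assumes "instance_ok n p r d" "valid_schedule n p r d S" "j \<in> jobs_of S"
  shows "finite {t. S t = Some j}"
proof -
  from assms(3) obtain x where "S x = Some j" by (auto simp: jobs_of_def)
  with assms(2) have "1 \<le> j" "j \<le> n" by (auto simp: valid_schedule_def)
  with assms(1) have "1 \<le> p j" by (auto simp: instance_ok_def)
  moreover from assms(2,3) have "card {t. S t = Some j} = p j" by (auto simp: valid_schedule_def)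
  ultimately show ?thesis using card.infinite by fastforce
qed

lemma compl_gt: "finite {t. S t = Some j} \<Longrightarrow> S x = Some j \<Longrightarrow> x < compl S j"
  unfolding compl_def by (auto intro!: le_imp_less_Suc Max_ge)

lemma compl_last:
  assumes "finite {t. S t = Some j}" "j \<in> jobs_of S"
  shows "S (compl S j - 1) = Some j"
proof -
  have "{t. S t = Some j} \<noteq> {}" using assms(2) by (auto simp: jobs_of_def)
  then have "Max {t. S t = Some j} \<in> {t. S t = Some j}" using assms(1) Max_in by blast
  then show ?thesis by (simp add: compl_def)
qed

lemma d_less: "instance_ok n p r d \<Longrightarrow> 1 \<le> j \<Longrightarrow> j < j' \<Longrightarrow> j' \<le> n \<Longrightarrow> d j < d j'"
  by (auto simp: instance_ok_def)

lemma cmax_ge: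
  assumes "j \<in> jobs_of S" "finite (jobs_of S)"
  shows "compl S j \<le> cmax r s S"
  using assms by (auto simp: cmax_def intro!: Max_ge)

lemma edfD: "edf r d S \<Longrightarrow> S t = Some j \<Longrightarrow> j' \<in> jobs_of S \<Longrightarrow> r j' \<le> t \<Longrightarrow> t < compl S j' \<Longrightarrow> d j \<le> d j'"
  unfolding edf_def by blast

lemma fsD1: "fixed_segment r S u t \<Longrightarrow> u \<le> x \<Longrightarrow> x < t \<Longrightarrow> S x \<noteq> None"
  unfolding fixed_segment_def by blast

lemma fsD2: "fixed_segment r S u t \<Longrightarrow> u \<le> x \<Longrightarrow> x < t \<Longrightarrow> S x = Some j \<Longrightarrow> u \<le> r j"
  unfolding fixed_segment_def by blast

theorem lemma2:
  fixes n :: nat and p r d :: "nat \<Rightarrow> nat" and s k u t :: nat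
    and S :: "nat \<Rightarrow> nat option"
  assumes "instance_ok n p r d"
    and "1 \<le> s" and "s \<le> n" and "k \<le> n"
    and "sk_schedule n p r d s k S"
    and "cmax r s S = t"
    and "fixed_segment r S u t"
  shows "\<forall>i. 1 \<le> i \<and> i \<le> k \<and> i \<in> jobs_of S \<and> u < compl S i \<and> compl S i \<le> t
           \<longrightarrow> compl S i = C_edf n p r d s i"
proof (intro allI impI)
  fix i assume H: "1 \<le> i \<and> i \<le> k \<and> i \<in> jobs_of S \<and> u < compl S i \<and> compl S i \<le> t"
  define c where "c = compl S i"
  have inst: "instance_ok n p r d" by fact
  from assms(5) have val: "valid_schedule n p r d S" and ed: "edf r d S"
    and jS: "jobs_of S = {j. 1 \<le> j \<and> j \<le> k \<and> r s \<le> r j \<and> r j < cmax r s S}"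
    by (auto simp: sk_schedule_def)
  have iS: "i \<in> jobs_of S" and i1: "1 \<le> i" and ik: "i \<le> k" and uc: "u < c" and ct: "c \<le> t"
    using H by (auto simp: c_def)
  have in_: "i \<le> n" using ik assms(4) by simp
  have fi: "finite {x. S x = Some i}" using fin_slots[OF inst val iS] .
  have Sc: "S (c - 1) = Some i" using compl_last[OF fi iS] by (simp add: c_def)
  have islot: "\<And>x. S x = Some i \<Longrightarrow> x < c" using compl_gt[OF fi] by (simp add: c_def)
  have vS: "\<And>x j. S x = Some j \<Longrightarrow> 1 \<le> j \<and> j \<le> n \<and> r j \<le> x \<and> x < d j"
    using val by (auto simp: valid_schedule_def)
  have L1: "\<And>j x. S x = Some j \<Longrightarrow> j < i \<Longrightarrow> r j < c \<Longrightarrow> x < c - 1"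
  proof -
    fix j x assume a: "S x = Some j" "j < i" "r j < c"
    have jj: "j \<in> jobs_of S" using a(1) by (auto simp: jobs_of_def)
    have fj: "finite {x. S x = Some j}" using fin_slots[OF inst val jj] .
    have xl: "x < compl S j" using compl_gt[OF fj a(1)] .
    have dl: "d j < d i" using d_less[OF inst _ a(2) in_] vS[OF a(1)] by simp
    show "x < c - 1"
    proof (rule ccontr)
      assume "\<not> x < c - 1"
      then have "c - 1 < compl S j" using xl by simp
      moreover have "r j \<le> c - 1" using a(3) by simp
      ultimately have "d i \<le> d j" using ed Sc jj by (auto simp: edf_def)
      then show False using dl by simp
    qed
  qed
  have K1: "\<And>j x y. S x = Some j \<Longrightarrow> x < c \<Longrightarrow> j \<le> i \<Longrightarrow> S y = Some j \<Longrightarrow> y < c"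
  proof -
    fix j x y assume a: "S x = Some j" "x < c" "j \<le> i" "S y = Some j"
    show "y < c"
    proof (cases "j = i")
      case True then show ?thesis using islot a(4) by simp
    next
      case False
      then have "j < i" using a(3) by simp
      moreover have "r j < c" using vS[OF a(1)] a(2) by simp
      ultimately show ?thesis using L1[OF a(4)] by simp
    qed
  qed
  define S0 where "S0 = (\<lambda>x. if x < c \<and> (\<exists>j. S x = Some j \<and> j \<le> i) then S x else None)"
  have S0D: "\<And>x j. S0 x = Some j \<Longrightarrow> S x = Some j \<and> x < c \<and> j \<le> i"
    by (auto simp: S0_def split: if_splits)
  have slots_eq: "\<And>j. j \<in> jobs_of S0 \<Longrightarrow> {x. S0 x = Some j} = {x. S x = Some j}"
  proof -
    fix j assume "j \<in> jobs_of S0"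
    then obtain x where x: "S0 x = Some j" by (auto simp: jobs_of_def)
    from S0D[OF x] have sx: "S x = Some j" and xc: "x < c" and ji: "j \<le> i" by auto
    show "{x. S0 x = Some j} = {x. S x = Some j}"
    proof (intro set_eqI iffI)
      fix y assume "y \<in> {x. S0 x = Some j}"
      then have "S0 y = Some j" by simp
      then show "y \<in> {x. S x = Some j}" using S0D by blast
    next
      fix y assume "y \<in> {x. S x = Some j}"
      then have y: "S y = Some j" by simp
      have "y < c" using K1[OF sx xc ji y] .
      then show "y \<in> {x. S0 x = Some j}" using y ji by (simp add: S0_def)
    qed
  qed
  have j0S: "jobs_of S0 \<subseteq> jobs_of S"
  proof
    fix j assume "j \<in> jobs_of S0"
    then obtain x where "S0 x = Some j" by (auto simp: jobs_of_def)
    then have "S x = Some j" using S0D by blast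
    then show "j \<in> jobs_of S" by (auto simp: jobs_of_def)
  qed
  have compl0: "\<And>j. j \<in> jobs_of S0 \<Longrightarrow> compl S0 j = compl S j"
    using slots_eq by (simp add: compl_def)
  have iS0: "i \<in> jobs_of S0"
  proof -
    have "c - 1 < c" using uc by simp
    then have "S0 (c - 1) = Some i" using Sc by (auto simp: S0_def)
    then show ?thesis by (auto simp: jobs_of_def)
  qed
  have ci0: "compl S0 i = c" using compl0[OF iS0] by (simp add: c_def)
  have fin0: "finite (jobs_of S0)"
  proof -
    have "jobs_of S0 \<subseteq> {..i}"
    proof
      fix j assume "j \<in> jobs_of S0"
      then obtain x where "S0 x = Some j" by (auto simp: jobs_of_def)
      then have "j \<le> i" using S0D by blast
      then show "j \<in> {..i}" by simp
    qed
    then show ?thesis using finite_subset by blast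
  qed
  have cle0: "\<And>j. j \<in> jobs_of S0 \<Longrightarrow> compl S0 j \<le> c"
  proof -
    fix j assume jj: "j \<in> jobs_of S0"
    have jjS: "j \<in> jobs_of S" using jj j0S by auto
    have fj: "finite {x. S0 x = Some j}" using slots_eq[OF jj] fin_slots[OF inst val jjS] by simp
    have "S0 (compl S0 j - 1) = Some j" using compl_last[OF fj jj] .
    then have "compl S0 j - 1 < c" using S0D by blast
    then show "compl S0 j \<le> c" by simp
  qed
  have cmax0: "cmax r s S0 = c"
  proof -
    have "jobs_of S0 \<noteq> {}" using iS0 by auto
    moreover have "Max (compl S0 ` jobs_of S0) = c"
      by (rule Max_eqI) (use fin0 cle0 iS0 ci0 in \<open>auto intro: image_eqI[where x=i]\<close>)
    ultimately show ?thesis by (simp add: cmax_def)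
  qed
  have sk0: "sk_schedule n p r d s i S0"
    unfolding sk_schedule_def
  proof (intro conjI)
    show "valid_schedule n p r d S0"
    proof -
      have A: "\<forall>t j. S0 t = Some j \<longrightarrow> 1 \<le> j \<and> j \<le> n \<and> r j \<le> t \<and> t < d j"
        using S0D vS by blast
      have B: "\<forall>j \<in> jobs_of S0. card {t. S0 t = Some j} = p j"
      proof
        fix j assume jj: "j \<in> jobs_of S0"
        then have "j \<in> jobs_of S" using j0S by auto
        then show "card {t. S0 t = Some j} = p j" using slots_eq[OF jj] val
          by (auto simp: valid_schedule_def)
      qed
      show ?thesis unfolding valid_schedule_def using A B by blast
    qed
    show "edf r d S0"
      unfolding edf_def
    proof (intro allI impI)
      fix x j j' assume a: "S0 x = Some j" "j' \<in> jobs_of S0" "r j' \<le> x" "x < compl S0 j'"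
      have "S x = Some j" using S0D[OF a(1)] by simp
      moreover have "j' \<in> jobs_of S" using a(2) j0S by auto
      moreover have "x < compl S j'" using a(4) compl0[OF a(2)] by simp
      ultimately show "d j \<le> d j'" using ed a(3) by (auto simp: edf_def)
    qed
    show "cmax r s S0 \<le> d i" using cmax0 vS[OF Sc] uc by linarith
    show "jobs_of S0 = {j. 1 \<le> j \<and> j \<le> i \<and> r s \<le> r j \<and> r j < cmax r s S0}"
    proof (intro set_eqI iffI)
      fix j assume jj: "j \<in> jobs_of S0"
      then obtain x where x: "S0 x = Some j" by (auto simp: jobs_of_def)
      have "j \<in> jobs_of S" using jj j0S by auto
      then have "r s \<le> r j" using jS by auto
      then show "j \<in> {j. 1 \<le> j \<and> j \<le> i \<and> r s \<le> r j \<and> r j < cmax r s S0}"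
        using S0D[OF x] vS cmax0 by fastforce
    next
      fix j assume "j \<in> {j. 1 \<le> j \<and> j \<le> i \<and> r s \<le> r j \<and> r j < cmax r s S0}"
      then have a: "1 \<le> j" "j \<le> i" "r s \<le> r j" "r j < c" using cmax0 by auto
      have "j \<in> jobs_of S" using jS a ik ct assms(6) by auto
      then obtain x where x: "S x = Some j" by (auto simp: jobs_of_def)
      have "x < c"
      proof (cases "j = i")
        case True then show ?thesis using islot x by simp
      next
        case False then show ?thesis using L1[OF x] a by simp
      qed
      then have "S0 x = Some j" using x a by (auto simp: S0_def)
      then show "j \<in> jobs_of S0" by (auto simp: jobs_of_def)
    qed
  qed
  have lower: "\<And>S'. sk_schedule n p r d s i S' \<and> i \<in> jobs_of S' \<Longrightarrow> c \<le> compl S' i"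
  proof -
    fix S' assume "sk_schedule n p r d s i S' \<and> i \<in> jobs_of S'"
    then have val': "valid_schedule n p r d S'" and ed': "edf r d S'"
      and jS': "jobs_of S' = {j. 1 \<le> j \<and> j \<le> i \<and> r s \<le> r j \<and> r j < cmax r s S'}"
      and iS': "i \<in> jobs_of S'"
      by (auto simp: sk_schedule_def)
    define c' where "c' = compl S' i"
    show "c \<le> compl S' i"
    proof (rule ccontr)
      assume "\<not> c \<le> compl S' i"
      then have cc: "c' < c" by (simp add: c'_def)
      have vS': "\<And>x j. S' x = Some j \<Longrightarrow> 1 \<le> j \<and> j \<le> n \<and> r j \<le> x \<and> x < d j"
        using val' by (auto simp: valid_schedule_def)
      have fin': "finite (jobs_of S')"
      proof -
        have "jobs_of S' \<subseteq> {..i}" using jS' by auto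
        then show ?thesis using finite_subset by blast
      qed
      have c'max: "c' \<le> cmax r s S'" using cmax_ge[OF iS' fin'] by (simp add: c'_def)
      have fi': "finite {x. S' x = Some i}" using fin_slots[OF inst val' iS'] .
      have Sc': "S' (c' - 1) = Some i" using compl_last[OF fi' iS'] by (simp add: c'_def)
      have ric': "r i < c'"
      proof -
        have "r i \<le> c' - 1" using vS'[OF Sc'] by simp
        moreover have "c' - 1 < c'" using compl_gt[OF fi' Sc'] by (simp add: c'_def)
        ultimately show ?thesis by simp
      qed
      obtain a where ua: "u \<le> a" and ac: "a < c"
        and aprop: "\<And>x j. a \<le> x \<Longrightarrow> x < c \<Longrightarrow> S x = Some j \<Longrightarrow> j \<le> i \<and> a \<le> r j"
      proof -
        define X where "X = {x. u \<le> x \<and> x < c \<and> (\<exists>j. S x = Some j \<and> i < j)}"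
        show ?thesis
        proof (cases "X = {}")
          case True
          show ?thesis
          proof (rule that[of u])
            fix x j assume a: "u \<le> x" "x < c" "S x = Some j"
            then have "j \<le> i" using True by (auto simp: X_def)
            moreover have "u \<le> r j" using fsD2[OF assms(7) a(1) _ a(3)] a(2) ct by simp
            ultimately show "j \<le> i \<and> u \<le> r j" by simp
          qed (use uc in auto)
        next
          case False
          have finX: "finite X" unfolding X_def by (rule finite_subset[of _ "{..<c}"]) auto
          define m where "m = Max X"
          have mX: "m \<in> X" using Max_in[OF finX False] by (simp add: m_def)
          then obtain j0 where j0: "S m = Some j0" "i < j0" and um: "u \<le> m" and mc: "m < c"
            by (auto simp: X_def)
          have "m \<noteq> c - 1" using j0 Sc by auto
          then have smc: "Suc m < c" using mc by simp
          show ?thesis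
          proof (rule that[of "Suc m"])
            fix x j assume a: "Suc m \<le> x" "x < c" "S x = Some j"
            have "x \<notin> X" using Max_ge[OF finX] a(1) by (fastforce simp: m_def)
            then have ji: "j \<le> i" using a um by (auto simp: X_def)
            have "Suc m \<le> r j"
            proof (rule ccontr)
              assume "\<not> Suc m \<le> r j"
              then have rjm: "r j \<le> m" by simp
              have jj: "j \<in> jobs_of S" using a(3) by (auto simp: jobs_of_def)
              have fj: "finite {x. S x = Some j}" using fin_slots[OF inst val jj] .
              have "m < compl S j" using compl_gt[OF fj a(3)] a(1) by simp
              then have "d j0 \<le> d j" using edfD[OF ed j0(1) jj rjm] by simp
              moreover have "d j < d j0" using d_less[OF inst _ _ ] vS[OF a(3)] vS[OF j0(1)] ji j0(2)
                by simp
              ultimately show False by simp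
            qed
            then show "j \<le> i \<and> Suc m \<le> r j" using ji by simp
          qed (use um smc in auto)
        qed
      qed
      define K where "K = {j. j \<in> jobs_of S \<and> j \<le> i \<and> a \<le> r j \<and> r j < c'}"
      have finK: "finite K"
      proof -
        have "K \<subseteq> {..i}" by (auto simp: K_def)
        then show ?thesis using finite_subset by blast
      qed
      have KS': "K \<subseteq> jobs_of S'"
      proof
        fix j assume "j \<in> K"
        then have "j \<in> jobs_of S" "j \<le> i" "r j < c'" by (auto simp: K_def)
        then show "j \<in> jobs_of S'" using jS jS' c'max by auto
      qed
      have sub': "(\<Union>j\<in>K. {x. S' x = Some j}) \<subseteq> {a..<c'}"
      proof (intro subsetI, elim UN_E)
        fix y j assume jK: "j \<in> K" and y: "y \<in> {x. S' x = Some j}"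
        then have y': "S' y = Some j" by simp
        have a1: "a \<le> y" using jK vS'[OF y'] by (auto simp: K_def)
        have "y < c'"
        proof (cases "j = i")
          case True then show ?thesis using compl_gt[OF fi'] y' by (simp add: c'_def)
        next
          case False
          then have ji: "j < i" using jK by (auto simp: K_def)
          have jj: "j \<in> jobs_of S'" using jK KS' by auto
          have fj: "finite {x. S' x = Some j}" using fin_slots[OF inst val' jj] .
          show ?thesis
          proof (rule ccontr)
            assume "\<not> y < c'"
            then have "c' - 1 < compl S' j" using compl_gt[OF fj y'] by simp
            moreover have "r j \<le> c' - 1" using jK by (auto simp: K_def)
            ultimately have "d i \<le> d j" using edfD[OF ed' Sc' jj] by simp
            moreover have "d j < d i" using d_less[OF inst _ ji in_] vS'[OF y'] by simp
            ultimately show False by simp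
          qed
        qed
        then show "y \<in> {a..<c'}" using a1 by simp
      qed
      have sub: "{a..<c'} \<union> {c - 1} \<subseteq> (\<Union>j\<in>K. {x. S x = Some j})"
      proof
        fix x assume x: "x \<in> {a..<c'} \<union> {c - 1}"
        show "x \<in> (\<Union>j\<in>K. {x. S x = Some j})"
        proof (cases "x = c - 1")
          case True
          have "a \<le> r i" using aprop[of "c - 1" i] ac Sc by simp
          then have "i \<in> K" using iS ric' by (auto simp: K_def)
          then show ?thesis using True Sc by auto
        next
          case False
          then have xa: "a \<le> x" "x < c'" using x by auto
          have "S x \<noteq> None" using fsD1[OF assms(7), of x] ua xa cc ct by simp
          then obtain j where j: "S x = Some j" by auto
          have "j \<le> i \<and> a \<le> r j" using aprop[OF xa(1) _ j] xa cc by simp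
          moreover have "r j < c'" using vS[OF j] xa by simp
          moreover have "j \<in> jobs_of S" using j by (auto simp: jobs_of_def)
          ultimately have "j \<in> K" by (auto simp: K_def)
          then show ?thesis using j by auto
        qed
      qed
      have KS: "\<And>j. j \<in> K \<Longrightarrow> j \<in> jobs_of S" by (simp add: K_def)
      have fS: "\<forall>j\<in>K. finite {x. S x = Some j}"
        using fin_slots[OF inst val] KS by blast
      have fS': "\<forall>j\<in>K. finite {x. S' x = Some j}"
        using fin_slots[OF inst val'] KS' by blast
      have disj: "\<And>T. \<forall>j\<in>K. \<forall>j'\<in>K. j \<noteq> j' \<longrightarrow> {x. T x = Some j} \<inter> {x. T x = Some j'} = {}"
        by auto
      have pS: "\<forall>j\<in>K. card {x. S x = Some j} = p j"
        using val KS unfolding valid_schedule_def by blast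
      have pS': "\<forall>j\<in>K. card {x. S' x = Some j} = p j"
        using val' KS' unfolding valid_schedule_def by blast
      have cardS: "card (\<Union>j\<in>K. {x. S x = Some j}) = (\<Sum>j\<in>K. p j)"
      proof -
        have "card (\<Union>j\<in>K. {x. S x = Some j}) = (\<Sum>j\<in>K. card {x. S x = Some j})"
          by (rule card_UN_disjoint[OF finK fS disj[of S]])
        also have "\<dots> = (\<Sum>j\<in>K. p j)"
          using pS by (intro sum.cong) simp_all
        finally show ?thesis .
      qed
      have cardS': "card (\<Union>j\<in>K. {x. S' x = Some j}) = (\<Sum>j\<in>K. p j)"
      proof -
        have "card (\<Union>j\<in>K. {x. S' x = Some j}) = (\<Sum>j\<in>K. card {x. S' x = Some j})"
          by (rule card_UN_disjoint[OF finK fS' disj[of S']])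
        also have "\<dots> = (\<Sum>j\<in>K. p j)"
          using pS' by (intro sum.cong) simp_all
        finally show ?thesis .
      qed
      have finU: "finite (\<Union>j\<in>K. {x. S x = Some j})"
        using finK fS by blast
      have "card ({a..<c'} \<union> {c - 1}) \<le> (\<Sum>j\<in>K. p j)"
        using card_mono[OF finU sub] cardS by simp
      moreover have "card ({a..<c'} \<union> {c - 1}) = c' - a + 1"
      proof -
        have "c - 1 \<notin> {a..<c'}" using cc by auto
        then show ?thesis by simp
      qed
      moreover have "(\<Sum>j\<in>K. p j) \<le> c' - a"
        using card_mono[OF _ sub'] cardS' by simp
      ultimately show False by simp
    qed
  qed
  have "(LEAST c. \<exists>S. sk_schedule n p r d s i S \<and> i \<in> jobs_of S \<and> compl S i = c) = c"
  proof (rule Least_equality)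
    show "\<exists>S. sk_schedule n p r d s i S \<and> i \<in> jobs_of S \<and> compl S i = c"
      using sk0 iS0 ci0 by blast
  next
    fix y assume "\<exists>S. sk_schedule n p r d s i S \<and> i \<in> jobs_of S \<and> compl S i = y"
    then show "c \<le> y" using lower by blast
  qed
  then show "compl S i = C_edf n p r d s i" by (simp add: C_edf_def c_def)
qed

end
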